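(* Let $(S,\mu)$ be a complete positive measure space and let $X$ be a Banach space whose norm is Fréchet differentiable. A non-zero element $f\in L^1(\mu,X)$ is a smooth point of $L^1(\mu,X)$ if $f(s)\neq 0$ for $\mu$-almost every $s\in S$. Conversely, if in addition $\mu$ is $\sigma$-finite and a non-zero $f\in L^1(\mu,X)$ is a smooth point of $L^1(\mu,X)$, then $f(s)\neq 0$ for $\mu$-almost every $s\in S$.
   Context: $L^1(\mu,X)$ is the Lebesgue–Bochner space of (classes of a.e. equal) strongly measurable $f:S\to X$ with $\int_S\|f(s)\|\,d\mu(s)<\infty$, normed by $\|f\|=\int_S\|f(s)\|\,d\mu(s)$. For a non-zero $x$ in a normed space $Y$, a support map at $x$ is a norm-one bounded linear functional $F$ on $Y$ with $F(x)=\|x\|$; $x$ is smooth if the support map at $x$ is unique. The norm of $X$ is Fréchet differentiable if for every non-zero $x\in X$ there is $\varphi\in X^*$ with $\lim_{h\to0}\big|\|x+h\|-\|x\|-\varphi(h)\big|/\|h\|=0$. *)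

theory Defs
  imports "HOL-Analysis.Analysis"
begin

text \<open>A (semi)normed function space is given by a carrier V (a real linear subspace of
  the functions 's => 'x, operations pointwise) together with a seminorm N.  For L^1 the carrier is the set of
  Bochner integrable functions and N f is the integral of the pointwise norm; the quotient by
  a.e. equality is handled implicitly, since bounded functionals cannot distinguish
  functions at distance zero.\<close>

text \<open>We do
  not use the library's Bochner integral since it requires X to be second countable
  (separable), whereas X here is an arbitrary Banach space.\<close>
definition strongly_measurable :: "'s measure \<Rightarrow> ('s \<Rightarrow> 'x::real_normed_vector) \<Rightarrow> bool" where
  "strongly_measurable M f \<longleftrightarrow>
     (\<exists>u :: nat \<Rightarrow> 's \<Rightarrow> 'x. (\<forall>n. simple_function M (u n)) \<and>
        (AE s in M. (\<lambda>n. u n s) \<longlonglongrightarrow> f s))"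

definition L1 :: "'s measure \<Rightarrow> ('s \<Rightarrow> 'x::real_normed_vector) set" where
  "L1 M = {f. strongly_measurable M f \<and> (\<integral>\<^sup>+ s. ennreal (norm (f s)) \<partial>M) < \<infinity>}"

definition L1norm :: "'s measure \<Rightarrow> ('s \<Rightarrow> 'x::real_normed_vector) \<Rightarrow> real" where
  "L1norm M f = enn2real (\<integral>\<^sup>+ s. ennreal (norm (f s)) \<partial>M)"

definition bounded_linear_functional ::
  "('s \<Rightarrow> 'x::real_normed_vector) set \<Rightarrow> (('s \<Rightarrow> 'x) \<Rightarrow> real) \<Rightarrow> (('s \<Rightarrow> 'x) \<Rightarrow> real) \<Rightarrow> bool" where
  "bounded_linear_functional V N F \<longleftrightarrow>
     (\<forall>g\<in>V. \<forall>h\<in>V. F (\<lambda>s. g s + h s) = F g + F h) \<and>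
     (\<forall>c. \<forall>g\<in>V. F (\<lambda>s. c *\<^sub>R g s) = c * F g) \<and>
     (\<exists>C. \<forall>g\<in>V. \<bar>F g\<bar> \<le> C * N g)"

definition functional_norm ::
  "'v set \<Rightarrow> ('v \<Rightarrow> real) \<Rightarrow> ('v \<Rightarrow> real) \<Rightarrow> real" where
  "functional_norm V N F = Sup {\<bar>F g\<bar> | g. g \<in> V \<and> N g \<le> 1}"

definition support_map ::
  "('s \<Rightarrow> 'x::real_normed_vector) set \<Rightarrow> (('s \<Rightarrow> 'x) \<Rightarrow> real) \<Rightarrow> ('s \<Rightarrow> 'x) \<Rightarrow> (('s \<Rightarrow> 'x) \<Rightarrow> real) \<Rightarrow> bool" where
  "support_map V N x F \<longleftrightarrow>
     bounded_linear_functional V N F \<and> functional_norm V N F = 1 \<and> F x = N x"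

definition smooth_point ::
  "('s \<Rightarrow> 'x::real_normed_vector) set \<Rightarrow> (('s \<Rightarrow> 'x) \<Rightarrow> real) \<Rightarrow> ('s \<Rightarrow> 'x) \<Rightarrow> bool" where
  "smooth_point V N x \<longleftrightarrow>
     (\<exists>F. support_map V N x F \<and>
        (\<forall>G. support_map V N x G \<longrightarrow> (\<forall>g\<in>V. G g = F g)))"

definition frechet_smooth_norm :: "'x::real_normed_vector itself \<Rightarrow> bool" where
  "frechet_smooth_norm _ \<longleftrightarrow> (\<forall>x::'x. x \<noteq> 0 \<longrightarrow> norm differentiable (at x))"

end

theory Submission imports Defs begin

definition dphi :: "'x::real_normed_vector \<Rightarrow> 'x \<Rightarrow> real" where
  "dphi x = frechet_derivative norm (at x)"

lemma dphi_lim: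
  fixes x :: "'x::real_normed_vector"
  assumes "norm differentiable (at x)"
  shows "bounded_linear (dphi x)"
    and "(\<lambda>n. (norm (x + inverse (real (Suc n)) *\<^sub>R v) - norm x) / inverse (real (Suc n)))
          \<longlonglongrightarrow> dphi x v"
proof -
  have D: "(norm has_derivative dphi x) (at x)"
    using assms frechet_derivative_works unfolding dphi_def by blast
  show bl: "bounded_linear (dphi x)" using has_derivative_bounded_linear[OF D] .
  have L: "((\<lambda>t::real. x + t *\<^sub>R v) has_derivative (\<lambda>t. t *\<^sub>R v)) (at 0)"
    by (auto intro!: derivative_eq_intros)
  have D': "(norm has_derivative dphi x) (at ((\<lambda>t::real. x + t *\<^sub>R v) 0))" using D by simp
  have C: "((\<lambda>t::real. norm (x + t *\<^sub>R v)) has_derivative (\<lambda>t. dphi x (t *\<^sub>R v))) (at 0)"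
    using diff_chain_at[OF L D'] by (simp add: o_def)
  have eq: "(\<lambda>t. dphi x (t *\<^sub>R v)) = (*) (dphi x v)"
    using bl by (auto simp: linear_scale bounded_linear.linear)
  have "((\<lambda>t::real. norm (x + t *\<^sub>R v)) has_field_derivative dphi x v) (at 0)"
    using C unfolding has_field_derivative_def eq .
  then have T: "(\<lambda>h. (norm (x + h *\<^sub>R v) - norm x) / h) \<midarrow>0\<rightarrow> dphi x v"
    unfolding DERIV_def by simp
  show "(\<lambda>n. (norm (x + inverse (real (Suc n)) *\<^sub>R v) - norm x) / inverse (real (Suc n)))
          \<longlonglongrightarrow> dphi x v"
    using T[unfolded LIMSEQ_SEQ_conv[symmetric], rule_format, of "\<lambda>n. inverse (real (Suc n))"]
      LIMSEQ_inverse_real_of_nat by simp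
qed

lemma quot_bound:
  fixes x v :: "'x::real_normed_vector"
  assumes "t > 0"
  shows "\<bar>(norm (x + t *\<^sub>R v) - norm x) / t\<bar> \<le> norm v"
proof -
  have "\<bar>norm (x + t *\<^sub>R v) - norm x\<bar> \<le> norm (t *\<^sub>R v)"
    by (metis add_diff_cancel_left' norm_triangle_ineq3)
  also have "\<dots> = t * norm v" using assms by simp
  finally show ?thesis using assms by (simp add: divide_le_eq abs_div mult.commute)
qed

lemma dphi_props:
  fixes x :: "'x::real_normed_vector"
  assumes "norm differentiable (at x)"
  shows "\<bar>dphi x v\<bar> \<le> norm v" and "dphi x x = norm x"
proof -
  have "\<bar>dphi x v\<bar> \<le> norm v"
    by (rule Lim_bounded[OF tendsto_rabs[OF dphi_lim(2)[OF assms, of v]], of 0])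
       (intro allI impI quot_bound; simp)
  then show "\<bar>dphi x v\<bar> \<le> norm v" .
  have q: "(norm (x + t *\<^sub>R x) - norm x) / t = norm x" if "t > 0" for t :: real
  proof -
    have "x + t *\<^sub>R x = (1 + t) *\<^sub>R x" by (simp add: scaleR_add_left)
    then have "norm (x + t *\<^sub>R x) = norm ((1 + t) *\<^sub>R x)" by (rule arg_cong)
    also have "\<dots> = (1 + t) * norm x" using that by (simp del: scaleR_add_left)
    finally have "norm (x + t *\<^sub>R x) - norm x = t * norm x" by (simp add: algebra_simps)
    then show ?thesis using that by simp
  qed
  have "(\<lambda>n. (norm (x + inverse (real (Suc n)) *\<^sub>R x) - norm x) / inverse (real (Suc n)))
      = (\<lambda>n. norm x)"
  proof
    fix n
    show "(norm (x + inverse (real (Suc n)) *\<^sub>R x) - norm x) / inverse (real (Suc n)) = norm x"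
      by (rule q) simp
  qed
  then have "(\<lambda>n. norm x) \<longlonglongrightarrow> dphi x x"
    using dphi_lim(2)[OF assms, of x] by simp
  then show "dphi x x = norm x"
    using LIMSEQ_unique[OF _ tendsto_const] by blast
qed

definition Phi :: "('a \<Rightarrow> 'x::real_normed_vector) \<Rightarrow> real \<Rightarrow> 'a set \<Rightarrow> ('x \<Rightarrow> real) \<Rightarrow> 'a \<Rightarrow> 'x \<Rightarrow> real" where
  "Phi f c A \<psi> s v = (if f s \<noteq> 0 then dphi (f s) v else c * indicator A s * \<psi> v)"

lemma quot_conv:
  fixes x v :: "'x::real_normed_vector"
  assumes fs: "\<forall>y::'x. y \<noteq> 0 \<longrightarrow> norm differentiable (at y)"
  shows "(\<lambda>n. (norm (x + inverse (real (Suc n)) *\<^sub>R v) - norm x) / inverse (real (Suc n)))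
          \<longlonglongrightarrow> (if x \<noteq> 0 then dphi x v else norm v)"
proof (cases "x = 0")
  case True
  then show ?thesis by simp
next
  case False
  then show ?thesis using dphi_lim(2) fs by auto
qed

context complete_measure
begin

lemma AE_eq_meas:
  fixes f g :: "'a \<Rightarrow> 'b::topological_space"
  assumes "g \<in> borel_measurable M" "AE x in M. f x = g x"
  shows "f \<in> borel_measurable M"
proof (rule borel_measurableI)
  fix S :: "'b set" assume "open S"
  then have gS: "g -` S \<inter> space M \<in> sets M" using assms(1) by (simp add: measurable_sets_borel)
  show "f -` S \<inter> space M \<in> sets M"
    by (rule in_sets_AE[OF _ gS]) (use assms(2) in \<open>auto elim!: AE_mp\<close>)
qed

lemma AE_lim_meas:
  fixes s :: "nat \<Rightarrow> 'a \<Rightarrow> 'b::metric_space"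
  assumes meas: "\<And>i. s i \<in> borel_measurable M" and lim: "AE x in M. (\<lambda>i. s i x) \<longlonglongrightarrow> h x"
  shows "h \<in> borel_measurable M"
proof -
  obtain N where N: "N \<in> null_sets M" "{x\<in>space M. \<not> (\<lambda>i. s i x) \<longlonglongrightarrow> h x} \<subseteq> N"
    using lim by (auto simp: eventually_ae_filter)
  have Ns: "N \<in> sets M" using N by auto
  obtain c :: 'b where True by auto
  define s' where "s' i x = (if x \<in> N then c else s i x)" for i x
  define h' where "h' x = (if x \<in> N then c else h x)" for x
  have "s' i \<in> borel_measurable M" for i
    unfolding s'_def using Ns meas by measurable
  moreover have "(\<lambda>i. s' i x) \<longlonglongrightarrow> h' x" if "x \<in> space M" for x
    using N that by (auto simp: s'_def h'_def)
  ultimately have "h' \<in> borel_measurable M" by (rule borel_measurable_LIMSEQ_metric)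
  moreover have "AE x in M. h x = h' x"
    using AE_not_in[OF N(1)] by eventually_elim (auto simp: h'_def)
  ultimately show ?thesis by (rule AE_eq_meas)
qed

lemma sm_cont_meas:
  fixes h :: "'a \<Rightarrow> 'x::real_normed_vector" and T :: "'x \<Rightarrow> 'b::metric_space"
  assumes "strongly_measurable M h" "continuous_on UNIV T"
  shows "(\<lambda>x. T (h x)) \<in> borel_measurable M"
proof -
  obtain u where u: "\<And>n. simple_function M (u n)" "AE s in M. (\<lambda>n. u n s) \<longlonglongrightarrow> h s"
    using assms(1) unfolding strongly_measurable_def by blast
  have "simple_function M (\<lambda>x. T (u n x))" for n
    using simple_function_compose[OF u(1), of T n] by (simp add: o_def)
  then have "(\<lambda>x. T (u n x)) \<in> borel_measurable M" for n
    by (rule borel_measurable_simple_function)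
  moreover have "AE x in M. (\<lambda>n. T (u n x)) \<longlonglongrightarrow> T (h x)"
    using u(2) proof eventually_elim
    case (elim x)
    then show ?case using assms(2) continuous_on_tendsto_compose[of UNIV T] by auto
  qed
  ultimately show ?thesis by (rule AE_lim_meas)
qed

lemma sm_add:
  fixes g h :: "'a \<Rightarrow> 'x::real_normed_vector"
  assumes "strongly_measurable M g" "strongly_measurable M h"
  shows "strongly_measurable M (\<lambda>x. g x + h x)"
proof -
  obtain u where u: "\<And>n. simple_function M (u n)" "AE s in M. (\<lambda>n. u n s) \<longlonglongrightarrow> g s"
    using assms(1) unfolding strongly_measurable_def by blast
  obtain v where v: "\<And>n. simple_function M (v n)" "AE s in M. (\<lambda>n. v n s) \<longlonglongrightarrow> h s"
    using assms(2) unfolding strongly_measurable_def by blast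
  show ?thesis unfolding strongly_measurable_def
  proof (intro exI conjI allI)
    show "simple_function M (\<lambda>x. u n x + v n x)" for n
      using simple_function_compose2[OF u(1) v(1)] .
    show "AE s in M. (\<lambda>n. u n s + v n s) \<longlonglongrightarrow> g s + h s"
      using u(2) v(2) by eventually_elim (rule tendsto_add)
  qed
qed

lemma sm_scale:
  fixes g :: "'a \<Rightarrow> 'x::real_normed_vector"
  assumes "strongly_measurable M g"
  shows "strongly_measurable M (\<lambda>x. c *\<^sub>R g x)"
proof -
  obtain u where u: "\<And>n. simple_function M (u n)" "AE s in M. (\<lambda>n. u n s) \<longlonglongrightarrow> g s"
    using assms(1) unfolding strongly_measurable_def by blast
  show ?thesis unfolding strongly_measurable_def
  proof (intro exI conjI allI)
    show "simple_function M (\<lambda>x. c *\<^sub>R u n x)" for n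
      using simple_function_compose[OF u(1), of "\<lambda>y. c *\<^sub>R y" n] by (simp add: o_def)
    show "AE s in M. (\<lambda>n. c *\<^sub>R u n s) \<longlonglongrightarrow> c *\<^sub>R g s"
      using u(2) by eventually_elim (intro tendsto_intros)
  qed
qed

lemma L1_norm_meas:
  fixes g :: "'a \<Rightarrow> 'x::real_normed_vector"
  assumes "strongly_measurable M g"
  shows "(\<lambda>x. norm (g x)) \<in> borel_measurable M"
  using sm_cont_meas[OF assms, of norm] by (simp add: continuous_on_norm_id)

lemma L1_integrable:
  fixes g :: "'a \<Rightarrow> 'x::real_normed_vector"
  assumes "g \<in> L1 M"
  shows "integrable M (\<lambda>x. norm (g x))" and "L1norm M g = (\<integral>x. norm (g x) \<partial>M)"
proof -
  have m: "(\<lambda>x. norm (g x)) \<in> borel_measurable M"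
    using assms L1_norm_meas unfolding L1_def by auto
  show i: "integrable M (\<lambda>x. norm (g x))"
    using m assms unfolding L1_def by (auto simp: integrable_iff_bounded)
  have "(\<integral>\<^sup>+ x. ennreal (norm (g x)) \<partial>M) = ennreal (\<integral>x. norm (g x) \<partial>M)"
    using nn_integral_eq_integral[OF i] by simp
  then show "L1norm M g = (\<integral>x. norm (g x) \<partial>M)"
    unfolding L1norm_def by simp
qed

lemma L1_add:
  fixes g h :: "'a \<Rightarrow> 'x::real_normed_vector"
  assumes "g \<in> L1 M" "h \<in> L1 M"
  shows "(\<lambda>x. g x + h x) \<in> L1 M"
proof -
  have sm: "strongly_measurable M (\<lambda>x. g x + h x)"
    using assms sm_add unfolding L1_def by auto
  have mg: "(\<lambda>x. norm (g x)) \<in> borel_measurable M" and mh: "(\<lambda>x. norm (h x)) \<in> borel_measurable M"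
    using assms L1_norm_meas unfolding L1_def by auto
  have "(\<integral>\<^sup>+ x. ennreal (norm (g x + h x)) \<partial>M) \<le> (\<integral>\<^sup>+ x. ennreal (norm (g x)) + ennreal (norm (h x)) \<partial>M)"
    by (intro nn_integral_mono) (simp add: norm_triangle_ineq flip: ennreal_plus)
  also have "\<dots> = (\<integral>\<^sup>+ x. ennreal (norm (g x)) \<partial>M) + (\<integral>\<^sup>+ x. ennreal (norm (h x)) \<partial>M)"
    using mg mh by (intro nn_integral_add) auto
  also have "\<dots> < \<infinity>" using assms unfolding L1_def by auto
  finally show ?thesis using sm unfolding L1_def by auto
qed

lemma L1_scale:
  fixes g :: "'a \<Rightarrow> 'x::real_normed_vector"
  assumes "g \<in> L1 M"
  shows "(\<lambda>x. c *\<^sub>R g x) \<in> L1 M"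
proof -
  have sm: "strongly_measurable M (\<lambda>x. c *\<^sub>R g x)"
    using assms sm_scale unfolding L1_def by auto
  have mg: "(\<lambda>x. norm (g x)) \<in> borel_measurable M"
    using assms L1_norm_meas unfolding L1_def by auto
  have "(\<integral>\<^sup>+ x. ennreal (norm (c *\<^sub>R g x)) \<partial>M) = (\<integral>\<^sup>+ x. ennreal \<bar>c\<bar> * ennreal (norm (g x)) \<partial>M)"
    by (simp add: ennreal_mult)
  also have "\<dots> = ennreal \<bar>c\<bar> * (\<integral>\<^sup>+ x. ennreal (norm (g x)) \<partial>M)"
    using mg by (intro nn_integral_cmult) auto
  also have "\<dots> < \<infinity>" using assms unfolding L1_def by (simp add: ennreal_mult_less_top)
  finally show ?thesis using sm unfolding L1_def by auto
qed

lemma L1norm_scale: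
  fixes g :: "'a \<Rightarrow> 'x::real_normed_vector"
  assumes "g \<in> L1 M"
  shows "L1norm M (\<lambda>x. c *\<^sub>R g x) = \<bar>c\<bar> * L1norm M g"
  using L1_integrable(2)[OF L1_scale[OF assms, of c]] L1_integrable(2)[OF assms] by simp


lemma L1norm_nonneg: "L1norm M g \<ge> 0"
  unfolding L1norm_def by simp

lemma support_le:
  fixes f h :: "'a \<Rightarrow> 'x::real_normed_vector"
  assumes G: "support_map (L1 M) (L1norm M) f G" and h: "h \<in> L1 M"
  shows "G h \<le> L1norm M h"
proof -
  from G have hom: "\<forall>c. \<forall>g\<in>(L1 M :: ('a \<Rightarrow> 'x) set). G (\<lambda>s. c *\<^sub>R g s) = c * G g"
    and fn: "functional_norm (L1 M) (L1norm M) G = 1"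
    unfolding support_map_def bounded_linear_functional_def by auto
  from G obtain C where C: "\<forall>g\<in>(L1 M :: ('a \<Rightarrow> 'x) set). \<bar>G g\<bar> \<le> C * L1norm M g"
    unfolding support_map_def bounded_linear_functional_def by auto
  show ?thesis
  proof (cases "L1norm M h = 0")
    case True
    then show ?thesis using C h by force
  next
    case False
    then have pos: "L1norm M h > 0" using L1norm_nonneg[of h] by linarith
    define h' where "h' = (\<lambda>s. (1 / L1norm M h) *\<^sub>R h s)"
    have h'L: "h' \<in> L1 M" unfolding h'_def using L1_scale[OF h] .
    have nh': "L1norm M h' = 1" unfolding h'_def using L1norm_scale[OF h] pos by simp
    have Gh': "G h' = G h / L1norm M h" unfolding h'_def using hom h by simp
    have bdd: "bdd_above {\<bar>G g\<bar> | g. g \<in> L1 M \<and> L1norm M g \<le> 1}"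
    proof (rule bdd_aboveI[of _ "\<bar>C\<bar>"])
      fix x assume "x \<in> {\<bar>G g\<bar> | g. g \<in> L1 M \<and> L1norm M g \<le> 1}"
      then obtain g where g: "x = \<bar>G g\<bar>" "g \<in> L1 M" "L1norm M g \<le> 1" by auto
      have "C * L1norm M g \<le> \<bar>C\<bar> * L1norm M g" using L1norm_nonneg[of g]
        by (simp add: mult_right_mono)
      also have "\<dots> \<le> \<bar>C\<bar>" using g(3) L1norm_nonneg[of g] by (simp add: mult_left_le)
      finally show "x \<le> \<bar>C\<bar>" using C g by force
    qed
    have "\<bar>G h'\<bar> \<le> Sup {\<bar>G g\<bar> | g. g \<in> L1 M \<and> L1norm M g \<le> 1}"
      by (rule cSup_upper[OF _ bdd]) (use h'L nh' in auto)
    then have "\<bar>G h'\<bar> \<le> 1" using fn unfolding functional_norm_def by simp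
    then have "G h' \<le> 1" by linarith
    then have "G h / L1norm M h \<le> 1" by (simp only: Gh')
    then show ?thesis using pos by (simp add: divide_le_eq)
  qed
qed

lemma support_pointwise:
  fixes f :: "'a \<Rightarrow> 'x::real_normed_vector" and \<Phi> :: "'a \<Rightarrow> 'x \<Rightarrow> real"
  assumes fL: "f \<in> L1 M" and fn0: "L1norm M f \<noteq> 0"
    and lin: "\<And>s. linear (\<Phi> s)" and bnd: "\<And>s v. \<bar>\<Phi> s v\<bar> \<le> norm v"
    and ff: "\<And>s. \<Phi> s (f s) = norm (f s)"
    and meas: "\<And>g. g \<in> L1 M \<Longrightarrow> (\<lambda>s. \<Phi> s (g s)) \<in> borel_measurable M"
  shows "support_map (L1 M) (L1norm M) f (\<lambda>g. \<integral>s. \<Phi> s (g s) \<partial>M)"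
proof -
  let ?F = "\<lambda>g. \<integral>s. \<Phi> s (g s) \<partial>M"
  have int: "integrable M (\<lambda>s. \<Phi> s (g s))" if "g \<in> L1 M" for g
    by (rule Bochner_Integration.integrable_bound[OF L1_integrable(1)[OF that] meas[OF that]]) (use bnd in auto)
  have Fb: "\<bar>?F g\<bar> \<le> L1norm M g" if "g \<in> L1 M" for g
  proof -
    have "\<bar>?F g\<bar> \<le> (\<integral>s. \<bar>\<Phi> s (g s)\<bar> \<partial>M)"
      using integral_abs_bound by blast
    also have "\<dots> \<le> (\<integral>s. norm (g s) \<partial>M)"
      by (intro integral_mono int L1_integrable(1) that integrable_abs bnd)
    finally show ?thesis using L1_integrable(2)[OF that] by simp
  qed
  have Fs: "?F (\<lambda>s. c *\<^sub>R g s) = c * ?F g" if "g \<in> L1 M" for g c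
  proof -
    have "?F (\<lambda>s. c *\<^sub>R g s) = (\<integral>s. c * \<Phi> s (g s) \<partial>M)"
      using lin by (simp add: linear_scale)
    then show ?thesis by simp
  qed
  have blf: "bounded_linear_functional (L1 M) (L1norm M) ?F"
    unfolding bounded_linear_functional_def
  proof (intro conjI ballI allI exI[of _ 1])
    fix g h :: "'a \<Rightarrow> 'x" assume g: "g \<in> L1 M" and h: "h \<in> L1 M"
    have "?F (\<lambda>s. g s + h s) = (\<integral>s. \<Phi> s (g s) + \<Phi> s (h s) \<partial>M)"
      using lin by (simp add: linear_add)
    also have "\<dots> = ?F g + ?F h" using int[OF g] int[OF h] by simp
    finally show "?F (\<lambda>s. g s + h s) = ?F g + ?F h" .
  next
    fix c and g :: "'a \<Rightarrow> 'x" assume "g \<in> L1 M" then show "?F (\<lambda>s. c *\<^sub>R g s) = c * ?F g" by (rule Fs)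
  next
    fix g :: "'a \<Rightarrow> 'x" assume "g \<in> L1 M" then show "\<bar>?F g\<bar> \<le> 1 * L1norm M g" using Fb by simp
  qed
  have Ff: "?F f = L1norm M f" using ff L1_integrable(2)[OF fL] by simp
  have pos: "L1norm M f > 0" using fn0 L1norm_nonneg[of f] by linarith
  define f' where "f' = (\<lambda>s. (1 / L1norm M f) *\<^sub>R f s)"
  have f'L: "f' \<in> L1 M" unfolding f'_def using L1_scale[OF fL] .
  have nf': "L1norm M f' = 1" unfolding f'_def using L1norm_scale[OF fL] pos by simp
  have Ff': "?F f' = 1" unfolding f'_def using Fs[OF fL] Ff pos by simp
  have "Sup {\<bar>?F g\<bar> | g. g \<in> L1 M \<and> L1norm M g \<le> 1} = 1"
  proof (rule cSup_eq_maximum)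
    show "1 \<in> {\<bar>?F g\<bar> | g. g \<in> L1 M \<and> L1norm M g \<le> 1}"
      using f'L nf' Ff' by (intro CollectI exI[of _ f']) simp
    show "x \<le> 1" if "x \<in> {\<bar>?F g\<bar> | g. g \<in> L1 M \<and> L1norm M g \<le> 1}" for x
      using that Fb by force
  qed
  then show ?thesis
    unfolding support_map_def functional_norm_def using blf Ff by simp
qed


lemma quot_meas:
  fixes f g :: "'a \<Rightarrow> 'x::real_normed_vector"
  assumes "f \<in> L1 M" "g \<in> L1 M"
  shows "(\<lambda>s. (norm (f s + t *\<^sub>R g s) - norm (f s)) / t) \<in> borel_measurable M"
proof -
  have "(\<lambda>s. norm (f s + t *\<^sub>R g s)) \<in> borel_measurable M"
    using assms by (intro L1_norm_meas sm_add sm_scale) (auto simp: L1_def)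
  moreover have "(\<lambda>s. norm (f s)) \<in> borel_measurable M"
    using assms by (intro L1_norm_meas) (auto simp: L1_def)
  ultimately show ?thesis
    by (intro borel_measurable_divide borel_measurable_diff borel_measurable_const)
qed

lemma P_meas:
  fixes f g :: "'a \<Rightarrow> 'x::real_normed_vector"
  assumes fs: "\<forall>y::'x. y \<noteq> 0 \<longrightarrow> norm differentiable (at y)"
    and fL: "f \<in> L1 M" and gL: "g \<in> L1 M"
  shows "(\<lambda>s. if f s \<noteq> 0 then dphi (f s) (g s) else 0) \<in> borel_measurable M"
proof -
  let ?t = "\<lambda>n. inverse (real (Suc n))"
  define q where "q n s = (if norm (f s) = 0 then 0 else (norm (f s + ?t n *\<^sub>R g s) - norm (f s)) / ?t n)" for n s
  have m3: "(\<lambda>s. norm (f s)) \<in> borel_measurable M"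
    using fL by (intro L1_norm_meas) (auto simp: L1_def)
  have Zs: "{s\<in>space M. norm (f s) = 0} \<in> sets M"
  proof -
    have "{s\<in>space M. norm (f s) = 0} = (\<lambda>s. norm (f s)) -` {0} \<inter> space M" by auto
    also have "\<dots> \<in> sets M" using m3 by (rule measurable_sets) simp
    finally show ?thesis .
  qed
  have qm: "q n \<in> borel_measurable M" for n unfolding q_def
    by (rule measurable_If[OF borel_measurable_const quot_meas[OF fL gL] Zs])
  have qc: "(\<lambda>n. q n s) \<longlonglongrightarrow> (if f s \<noteq> 0 then dphi (f s) (g s) else 0)" for s
    using quot_conv[OF fs, of "f s" "g s"] by (auto simp: q_def)
  show ?thesis by (rule AE_lim_meas[OF qm AE_I2[OF qc]])
qed

lemma G_le:
  fixes f g :: "'a \<Rightarrow> 'x::real_normed_vector"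
  assumes fs: "\<forall>y::'x. y \<noteq> 0 \<longrightarrow> norm differentiable (at y)"
    and fL: "f \<in> L1 M" and gL: "g \<in> L1 M"
    and G: "support_map (L1 M) (L1norm M) f G"
  shows "G g \<le> (\<integral>s. (if f s \<noteq> 0 then dphi (f s) (g s) else norm (g s)) \<partial>M)"
proof -
  let ?t = "\<lambda>n. inverse (real (Suc n))"
  let ?lim = "\<lambda>s. (if f s \<noteq> 0 then dphi (f s) (g s) else norm (g s))"
  define q where "q n s = (norm (f s + ?t n *\<^sub>R g s) - norm (f s)) / ?t n" for n s
  from G have add: "\<forall>g\<in>(L1 M :: ('a \<Rightarrow> 'x) set). \<forall>h\<in>L1 M. G (\<lambda>s. g s + h s) = G g + G h"
    and hom: "\<forall>c. \<forall>g\<in>(L1 M :: ('a \<Rightarrow> 'x) set). G (\<lambda>s. c *\<^sub>R g s) = c * G g"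
    and Gf: "G f = L1norm M f"
    unfolding support_map_def bounded_linear_functional_def by auto
  have qm: "q n \<in> borel_measurable M" for n unfolding q_def using quot_meas[OF fL gL] .
  have qc: "(\<lambda>n. q n s) \<longlonglongrightarrow> ?lim s" for s
    using quot_conv[OF fs, of "f s" "g s"] by (auto simp: q_def)
  have limm: "?lim \<in> borel_measurable M" by (rule AE_lim_meas[OF qm AE_I2[OF qc]])
  have bound: "AE s in M. norm (q n s) \<le> norm (g s)" for n
    unfolding q_def real_norm_def by (intro AE_I2 quot_bound) simp
  have conv: "(\<lambda>n. \<integral>s. q n s \<partial>M) \<longlonglongrightarrow> (\<integral>s. ?lim s \<partial>M)"
    by (rule integral_dominated_convergence[OF limm qm L1_integrable(1)[OF gL]])
       (use qc bound in auto)
  have le: "G g \<le> (\<integral>s. q n s \<partial>M)" for n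
  proof -
    have hL: "(\<lambda>s. ?t n *\<^sub>R g s) \<in> L1 M" using L1_scale[OF gL] .
    have fhL: "(\<lambda>s. f s + ?t n *\<^sub>R g s) \<in> L1 M" using L1_add[OF fL hL] .
    have "G (\<lambda>s. f s + ?t n *\<^sub>R g s) = L1norm M f + ?t n * G g"
      using add fL hL hom gL Gf by simp
    moreover have "G (\<lambda>s. f s + ?t n *\<^sub>R g s) \<le> L1norm M (\<lambda>s. f s + ?t n *\<^sub>R g s)"
      using support_le[OF G fhL] .
    ultimately have "?t n * G g \<le> L1norm M (\<lambda>s. f s + ?t n *\<^sub>R g s) - L1norm M f" by simp
    then have "G g \<le> (L1norm M (\<lambda>s. f s + ?t n *\<^sub>R g s) - L1norm M f) / ?t n"
      by (simp add: field_simps)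
    also have "\<dots> = ((\<integral>s. norm (f s + ?t n *\<^sub>R g s) \<partial>M) - (\<integral>s. norm (f s) \<partial>M)) / ?t n"
      using L1_integrable(2)[OF fhL] L1_integrable(2)[OF fL] by simp
    also have "\<dots> = (\<integral>s. q n s \<partial>M)"
      unfolding q_def using L1_integrable(1)[OF fhL] L1_integrable(1)[OF fL] by simp
    finally show ?thesis .
  qed
  show ?thesis by (rule LIMSEQ_le_const[OF conv]) (use le in auto)
qed

lemma Phi_support:
  fixes f :: "'a \<Rightarrow> 'x::real_normed_vector"
  assumes fs: "\<forall>y::'x. y \<noteq> 0 \<longrightarrow> norm differentiable (at y)"
    and fL: "f \<in> L1 M" and fn0: "L1norm M f \<noteq> 0"
    and A: "A \<in> sets M" and \<psi>: "bounded_linear \<psi>" "\<And>v. \<bar>\<psi> v\<bar> \<le> norm v" and c: "\<bar>c\<bar> \<le> 1"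
  shows "support_map (L1 M) (L1norm M) f (\<lambda>g. \<integral>s. Phi f c A \<psi> s (g s) \<partial>M)"
proof (rule support_pointwise[OF fL fn0])
  fix s
  show "linear (Phi f c A \<psi> s)"
  proof (cases "f s = 0")
    case True
    then have "Phi f c A \<psi> s = (\<lambda>v. (c * indicator A s) * \<psi> v)" by (auto simp: Phi_def)
    moreover have "bounded_linear (\<lambda>v. (c * indicator A s) * \<psi> v)"
      by (rule bounded_linear_const_mult[OF \<psi>(1)])
    ultimately show ?thesis by (simp add: bounded_linear.linear)
  next
    case False
    then have "Phi f c A \<psi> s = dphi (f s)" by (auto simp: Phi_def)
    moreover have "bounded_linear (dphi (f s))" using dphi_lim(1) fs False by blast
    ultimately show ?thesis by (simp add: bounded_linear.linear)
  qed
  fix v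
  show "\<bar>Phi f c A \<psi> s v\<bar> \<le> norm v"
  proof (cases "f s = 0")
    case True
    have "\<bar>c * indicator A s\<bar> \<le> 1" using c by (auto simp: indicator_def)
    then have "\<bar>c * indicator A s * \<psi> v\<bar> \<le> 1 * norm v"
      unfolding abs_mult using \<psi>(2)[of v] by (intro mult_mono) auto
    then show ?thesis using True by (simp add: Phi_def)
  next
    case False
    then have "\<bar>dphi (f s) v\<bar> \<le> norm v" using dphi_props(1) fs by blast
    then show ?thesis using False by (simp add: Phi_def)
  qed
next
  fix s
  show "Phi f c A \<psi> s (f s) = norm (f s)"
    using dphi_props(2) fs linear_0[OF bounded_linear.linear[OF \<psi>(1)]] by (auto simp: Phi_def)
next
  fix g :: "'a \<Rightarrow> 'x" assume gL: "g \<in> L1 M"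
  have m1: "(\<lambda>s. if f s \<noteq> 0 then dphi (f s) (g s) else 0) \<in> borel_measurable M"
    using P_meas[OF fs fL gL] .
  have m2: "(\<lambda>s. \<psi> (g s)) \<in> borel_measurable M"
    using gL \<psi>(1) by (intro sm_cont_meas linear_continuous_on) (auto simp: L1_def)
  have m3: "(\<lambda>s. norm (f s)) \<in> borel_measurable M"
    using fL by (intro L1_norm_meas) (auto simp: L1_def)
  have Zs: "{s\<in>space M. norm (f s) = 0} \<in> sets M"
  proof -
    have "{s\<in>space M. norm (f s) = 0} = (\<lambda>s. norm (f s)) -` {0} \<inter> space M" by auto
    also have "\<dots> \<in> sets M" using m3 by (rule measurable_sets) simp
    finally show ?thesis .
  qed
  have m4: "(\<lambda>s. c * indicator A s * \<psi> (g s)) \<in> borel_measurable M"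
    using A m2 by (intro borel_measurable_times borel_measurable_indicator borel_measurable_const)
  have m5: "(\<lambda>s. if norm (f s) = 0 then c * indicator A s * \<psi> (g s) else 0) \<in> borel_measurable M"
    by (rule measurable_If[OF m4 borel_measurable_const Zs])
  have eq: "(\<lambda>s. Phi f c A \<psi> s (g s)) = (\<lambda>s. (if f s \<noteq> 0 then dphi (f s) (g s) else 0) +
      (if norm (f s) = 0 then c * indicator A s * \<psi> (g s) else 0))"
    by (auto simp: Phi_def)
  show "(\<lambda>s. Phi f c A \<psi> s (g s)) \<in> borel_measurable M"
    unfolding eq by (rule borel_measurable_add[OF m1 m5])
qed

end


theorem theorem3p1:
  fixes M :: "'s measure" and f :: "'s \<Rightarrow> 'x::banach"
  assumes "complete_measure M"
    and "frechet_smooth_norm TYPE('x)"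
    and "f \<in> L1 M" and "L1norm M f \<noteq> 0"
  shows "((AE s in M. f s \<noteq> 0) \<longrightarrow> smooth_point (L1 M) (L1norm M) f)
    \<and> ((sigma_finite_measure M \<and> smooth_point (L1 M) (L1norm M) f)
         \<longrightarrow> (AE s in M. f s \<noteq> 0))"
proof -
  interpret complete_measure M by (rule assms(1))
  have fs: "\<forall>y::'x. y \<noteq> 0 \<longrightarrow> norm differentiable (at y)"
    using assms(2) unfolding frechet_smooth_norm_def by blast
  note fL = assms(3) and fn0 = assms(4)
  have m3: "(\<lambda>s. norm (f s)) \<in> borel_measurable M"
    using fL by (intro L1_norm_meas) (auto simp: L1_def)
  have bl0: "bounded_linear (\<lambda>v::'x. 0::real)" by (rule bounded_linear_zero)
  define F0 where "F0 = (\<lambda>g. \<integral>s. Phi f 0 {} (\<lambda>v. 0) s (g s) \<partial>M)"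
  have F0: "support_map (L1 M) (L1norm M) f F0"
    unfolding F0_def by (rule Phi_support[OF fs fL fn0]) (auto intro: bl0)
  have F0hom: "F0 (\<lambda>s. c *\<^sub>R g s) = c * F0 g" if "g \<in> L1 M" for c and g :: "'s \<Rightarrow> 'x"
    using F0 that unfolding support_map_def bounded_linear_functional_def by auto
  show ?thesis
  proof (intro conjI impI)
    assume ae: "AE s in M. f s \<noteq> 0"
    have le: "G g \<le> F0 g" if G: "support_map (L1 M) (L1norm M) f G" and gL: "g \<in> L1 M" for G and g :: "'s \<Rightarrow> 'x"
    proof -
      have "G g \<le> (\<integral>s. (if f s \<noteq> 0 then dphi (f s) (g s) else norm (g s)) \<partial>M)"
        by (rule G_le[OF fs fL gL G])
      also have "\<dots> = F0 g"
        unfolding F0_def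
      proof (rule integral_cong_AE)
        let ?q = "\<lambda>n s. (norm (f s + inverse (real (Suc n)) *\<^sub>R g s) - norm (f s)) / inverse (real (Suc n))"
        show "(\<lambda>s. if f s \<noteq> 0 then dphi (f s) (g s) else norm (g s)) \<in> borel_measurable M"
          by (rule AE_lim_meas[OF quot_meas[OF fL gL] AE_I2[OF quot_conv[OF fs]]])
        have "(\<lambda>s. Phi f 0 {} (\<lambda>v. 0) s (g s)) = (\<lambda>s. if f s \<noteq> 0 then dphi (f s) (g s) else 0)"
          by (auto simp: Phi_def)
        then show "(\<lambda>s. Phi f 0 {} (\<lambda>v. 0) s (g s)) \<in> borel_measurable M"
          using P_meas[OF fs fL gL] by simp
        show "AE s in M. (if f s \<noteq> 0 then dphi (f s) (g s) else norm (g s)) = Phi f 0 {} (\<lambda>v. 0) s (g s)"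
          using ae by eventually_elim (auto simp: Phi_def)
      qed
      finally show ?thesis .
    qed
    show "smooth_point (L1 M) (L1norm M) f"
      unfolding smooth_point_def
    proof (intro exI conjI allI impI ballI)
      show "support_map (L1 M) (L1norm M) f F0" by (rule F0)
      fix G and g :: "'s \<Rightarrow> 'x" assume G: "support_map (L1 M) (L1norm M) f G" and gL: "g \<in> L1 M"
      from G have hom: "\<forall>c. \<forall>g\<in>(L1 M :: ('s \<Rightarrow> 'x) set). G (\<lambda>s. c *\<^sub>R g s) = c * G g"
        unfolding support_map_def bounded_linear_functional_def by blast
      then have Ghom: "G (\<lambda>s. (-1) *\<^sub>R g s) = (-1) * G g" using gL by blast
      have "G (\<lambda>s. (-1) *\<^sub>R g s) \<le> F0 (\<lambda>s. (-1) *\<^sub>R g s)"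
        by (rule le[OF G L1_scale[OF gL]])
      then have "G g \<ge> F0 g" using Ghom F0hom[OF gL, of "-1"] by simp
      then show "G g = F0 g" using le[OF G gL] by simp
    qed
  next
    assume sm: "sigma_finite_measure M \<and> smooth_point (L1 M) (L1norm M) f"
    show "AE s in M. f s \<noteq> 0"
    proof (rule ccontr)
      assume nae: "\<not> (AE s in M. f s \<noteq> 0)"
      define Z where "Z = {s\<in>space M. norm (f s) = 0}"
      have Zs: "Z \<in> sets M"
      proof -
        have "Z = (\<lambda>s. norm (f s)) -` {0} \<inter> space M" unfolding Z_def by auto
        also have "\<dots> \<in> sets M" using m3 by (rule measurable_sets) simp
        finally show ?thesis .
      qed
      have "Z \<notin> null_sets M"
      proof
        assume "Z \<in> null_sets M"
        from AE_not_in[OF this] AE_space have "AE s in M. f s \<noteq> 0"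
          by eventually_elim (auto simp: Z_def)
        with nae show False by simp
      qed
      then have Zpos: "emeasure M Z > 0" using Zs by (auto simp: null_sets_def zero_less_iff_neq_zero)
      obtain A where A: "A \<in> sets M" "A \<subseteq> Z" "emeasure M A < \<infinity>" "emeasure M A > 0"
      proof (cases "emeasure M Z = \<infinity>")
        case True
        interpret sigma_finite_measure M using sm by blast
        obtain A where "A \<in> sets M" "A \<subseteq> Z" "emeasure M A < \<infinity>" "emeasure M A > ennreal 0"
          using approx_PInf_emeasure_with_finite[OF Zs True, of 0] by blast
        then show ?thesis using that by simp
      next
        case False
        then show ?thesis using that[of Z] Zs Zpos by (simp add: less_top)
      qed
      have mA: "measure M A > 0" using A by (simp add: measure_def enn2real_positive_iff)
      obtain s0 where s0: "f s0 \<noteq> 0"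
      proof (rule ccontr)
        assume "\<not> thesis"
        then have "\<forall>s. f s = 0" using that by blast
        then have "L1norm M f = 0" unfolding L1norm_def by simp
        with fn0 show False by simp
      qed
      define x0 where "x0 = f s0"
      define \<psi> where "\<psi> = dphi x0"
      have \<psi>: "bounded_linear \<psi>" "\<And>v. \<bar>\<psi> v\<bar> \<le> norm v" "\<psi> x0 = norm x0"
        unfolding \<psi>_def using fs s0 dphi_lim(1) dphi_props unfolding x0_def by blast+
      define F1 where "F1 = (\<lambda>g. \<integral>s. Phi f 1 A \<psi> s (g s) \<partial>M)"
      have F1: "support_map (L1 M) (L1norm M) f F1"
        unfolding F1_def by (rule Phi_support[OF fs fL fn0 A(1) \<psi>(1,2)]) auto
      from sm obtain F where F: "\<And>G. support_map (L1 M) (L1norm M) f G \<Longrightarrow> (\<forall>g\<in>L1 M. G g = F g)"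
        unfolding smooth_point_def by blast
      define g0 where "g0 = (\<lambda>s. indicator A s *\<^sub>R x0)"
      have sfg0: "simple_function M g0"
      proof -
        have "simple_function M (\<lambda>s. indicator A s :: real)" using A(1) by simp
        from simple_function_compose[OF this, of "\<lambda>r. r *\<^sub>R x0"] show ?thesis
          by (simp add: g0_def o_def)
      qed
      have g0L: "g0 \<in> L1 M"
        unfolding L1_def
      proof (intro CollectI conjI)
        show "strongly_measurable M g0" unfolding strongly_measurable_def
          by (rule exI[of _ "\<lambda>n. g0"]) (simp add: sfg0)
        have "(\<integral>\<^sup>+ s. ennreal (norm (g0 s)) \<partial>M) = (\<integral>\<^sup>+ s. ennreal (norm x0) * indicator A s \<partial>M)"
          by (intro nn_integral_cong) (auto simp: g0_def indicator_def)
        also have "\<dots> = ennreal (norm x0) * emeasure M A"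
          using A(1) by (simp add: nn_integral_cmult_indicator)
        also have "\<dots> < \<infinity>" using A(3) by (simp add: ennreal_mult_less_top)
        finally show "(\<integral>\<^sup>+ s. ennreal (norm (g0 s)) \<partial>M) < \<infinity>" .
      qed
      have Phi_g0: "Phi f c A \<psi> s (g0 s) = c * norm x0 * indicator A s" if "s \<in> space M" for c s
      proof (cases "s \<in> A")
        case True
        then have "f s = 0" using A(2) unfolding Z_def by auto
        then show ?thesis using True \<psi>(3) by (simp add: Phi_def g0_def)
      next
        case False
        have "dphi (f s) 0 = 0" if "f s \<noteq> 0"
          using dphi_lim(1) fs that by (metis bounded_linear.linear linear_0)
        then show ?thesis using False linear_0[OF bounded_linear.linear[OF \<psi>(1)]]
          by (simp add: Phi_def g0_def)
      qed
      have Fc: "(\<integral>s. Phi f c A \<psi> s (g0 s) \<partial>M) = c * norm x0 * measure M A" for c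
      proof -
        have "(\<integral>s. Phi f c A \<psi> s (g0 s) \<partial>M) = (\<integral>s. c * norm x0 * indicator A s \<partial>M)"
          by (rule Bochner_Integration.integral_cong[OF refl]) (simp add: Phi_g0)
        also have "\<dots> = c * norm x0 * measure M A"
          using A by (simp add: less_top)
        finally show ?thesis .
      qed
      have F0A: "F0 g0 = (\<integral>s. Phi f 0 A \<psi> s (g0 s) \<partial>M)"
        unfolding F0_def by (rule Bochner_Integration.integral_cong[OF refl]) (simp add: Phi_def)
      have "F0 g0 = F g0" "F1 g0 = F g0" using F[OF F0] F[OF F1] g0L by auto
      then have "F0 g0 = F1 g0" by simp
      then have "0 = norm x0 * measure M A" using Fc[of 0] Fc[of 1] F0A unfolding F1_def by simp
      moreover have "norm x0 > 0" using s0 x0_def by simp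
      ultimately show False using mA by simp
    qed
  qed
qed

end
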